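(* Let $m,N\in\mathbb N$, let $\mathcal B=(\mathcal B_1,\dots,\mathcal B_B)$ be a partition of $\{1,\dots,N\}$ with weights $\omega=(\omega_b)$, $\omega_b\ge1$. Assume $A\in\mathbb R^{m\times N}$ satisfies the $\ell^2_\omega$-BRNSP of order $s\ge\|\omega\|_\infty^2$ with constants $0<\rho<1$, $\tau>0$. Let $x\in\mathbb R^N$ and $y=Ax+e$ with $\|e\|_2\le\eta$. Let $\hat x$ be a solution of $$\min_{z\in\mathbb R^N}\|z\|_{2,1}^{(\omega)}=\sum_{j=1}^B\omega_j\|z[\mathcal B_j]\|_2\quad\text{s.t. }\|Az-y\|_2\le\eta.$$ Then $$\|x-\hat x\|_{2,1}^{(\omega)}\le 2C_\rho\,\sigma_s(x)_{2,1}^{(\omega)}+2D_{\rho,\tau}\sqrt s\,\eta,\qquad \|x-\hat x\|_2\le 2C_\rho\frac{\sigma_s(x)_{2,1}^{(\omega)}}{\sqrt s}+2D_{\rho,\tau}\eta,$$ where $C_\rho=\frac{(1+\rho)^2}{1-\rho}$ and $D_{\rho,\tau}=\frac{3+\rho}{1-\rho}\tau$.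
   Context: Block structure: $\mathcal B=(\mathcal B_1,\dots,\mathcal B_B)$ partition of $\{1,\dots,N\}$; $x[b]=x[\mathcal B_b]$; for $S\subseteq\{1,\dots,B\}$, $x[S]$ equals $x$ on blocks in $S$ and $0$ elsewhere, $S^c$ its complement in $\{1,\dots,B\}$. Weights $\omega_b\ge1$, $\|\omega\|_\infty=\max_b\omega_b$, $\omega(S)=\sum_{b\in S}\omega_b^2$. $\|x\|_{2,p}^{(\omega)}=\big(\sum_b\omega_b^{2-p}\|x[b]\|_2^p\big)^{1/p}$ (note $\|x\|_{2,2}^{(\omega)}=\|x\|_2$). $\|x\|_0^{(\omega)}=\omega(\{b:x[b]\ne0\})$. $\sigma_s(x)_{2,p}^{(\omega)}=\inf\{\|x-z\|_{2,p}^{(\omega)}:\|z\|_0^{(\omega)}\le s\}$. Definition ($\ell^p_\omega$-BRNSP): $A$ satisfies the weighted block $\ell^p$ robust null space property of order $s\ge\|\omega\|_\infty$ with constants $\rho\in(0,1)$, $\tau>0$ if $\|x[S]\|_{2,p}^{(\omega)}\le\frac{\rho}{s^{1-1/p}}\|x[S^c]\|_{2,1}^{(\omega)}+\tau\|Ax\|_2$ for all $x\in\mathbb R^N$ and all $S$ with $\omega(S)\le s$. *)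

theory Defs
  imports "HOL-Analysis.Analysis"
begin

text \<open>Block structure: a surjective map blk from the coordinate type 'n onto the
 finite block index type 'b; block b is the (nonempty) set of coordinates i with blk i = b.\<close>

definition block_partition :: "('n::finite \<Rightarrow> 'b::finite) \<Rightarrow> bool" where
  "block_partition blk \<longleftrightarrow> surj blk"

definition restrS :: "('n::finite \<Rightarrow> 'b) \<Rightarrow> real^'n \<Rightarrow> 'b set \<Rightarrow> real^'n" where
  "restrS blk x S = (\<chi> i. if blk i \<in> S then x $ i else 0)"

definition blk_vec :: "('n::finite \<Rightarrow> 'b) \<Rightarrow> real^'n \<Rightarrow> 'b \<Rightarrow> real^'n" where
  "blk_vec blk x b = restrS blk x {b}"

definition wnorm :: "('n::finite \<Rightarrow> 'b::finite) \<Rightarrow> ('b \<Rightarrow> real) \<Rightarrow> real \<Rightarrow> real^'n \<Rightarrow> real" where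
  "wnorm blk w p x = (\<Sum>b\<in>UNIV. w b powr (2 - p) * norm (blk_vec blk x b) powr p) powr (1 / p)"

definition wmeas :: "('b \<Rightarrow> real) \<Rightarrow> 'b set \<Rightarrow> real" where
  "wmeas w S = (\<Sum>b\<in>S. (w b)\<^sup>2)"

definition wnorm0 :: "('n::finite \<Rightarrow> 'b::finite) \<Rightarrow> ('b \<Rightarrow> real) \<Rightarrow> real^'n \<Rightarrow> real" where
  "wnorm0 blk w x = wmeas w {b. blk_vec blk x b \<noteq> 0}"

definition winf :: "('b::finite \<Rightarrow> real) \<Rightarrow> real" where
  "winf w = Max (range w)"

definition best_approx :: "('n::finite \<Rightarrow> 'b::finite) \<Rightarrow> ('b \<Rightarrow> real) \<Rightarrow> real \<Rightarrow> real \<Rightarrow> real^'n \<Rightarrow> real" where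
  "best_approx blk w s p x = (INF z\<in>{z. wnorm0 blk w z \<le> s}. wnorm blk w p (x - z))"

definition BRNSP :: "('n::finite \<Rightarrow> 'b::finite) \<Rightarrow> ('b \<Rightarrow> real) \<Rightarrow> real \<Rightarrow> real^'n^'m \<Rightarrow> real \<Rightarrow> real \<Rightarrow> real \<Rightarrow> bool" where
  "BRNSP blk w p A s \<rho> \<tau> \<longleftrightarrow> s \<ge> winf w \<and> 0 < \<rho> \<and> \<rho> < 1 \<and> \<tau> > 0 \<and>
     (\<forall>x S. wmeas w S \<le> s \<longrightarrow>
        wnorm blk w p (restrS blk x S) \<le> \<rho> / s powr (1 - 1/p) * wnorm blk w 1 (restrS blk x (- S)) + \<tau> * norm (A *v x))"

end

theory Submission
  imports Defs
begin


lemma blk_vec_comp: "blk_vec blk x b $ i = (if blk i = b then x $ i else 0)"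
  by (simp add: blk_vec_def restrS_def)

lemma blk_vec_restr: "blk_vec blk (restrS blk x S) b = (if b \<in> S then blk_vec blk x b else 0)"
  by (auto simp: blk_vec_def restrS_def vec_eq_iff)

lemma blk_vec_diff: "blk_vec blk (x - y) b = blk_vec blk x b - blk_vec blk y b"
  by (auto simp: blk_vec_def restrS_def vec_eq_iff)

lemma restr_split: "restrS blk x S + restrS blk x (- S) = x"
  by (auto simp: restrS_def vec_eq_iff)


lemma norm_sq_vec: "(norm (x::real^'n))\<^sup>2 = (\<Sum>i\<in>UNIV. (x $ i)\<^sup>2)"
  unfolding norm_vec_def L2_set_def by (simp add: sum_nonneg)

lemma norm_sq_blocks:
  fixes blk :: "'n::finite \<Rightarrow> 'b::finite"
  shows "(\<Sum>b\<in>UNIV. (norm (blk_vec blk x b))\<^sup>2) = (norm x)\<^sup>2"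
proof -
  have e: "(norm (blk_vec blk x b))\<^sup>2 = (\<Sum>i\<in>UNIV. (if blk i = b then (x$i)\<^sup>2 else 0))" for b
    unfolding norm_sq_vec blk_vec_comp by (rule sum.cong) auto
  have "(\<Sum>b\<in>UNIV. (norm (blk_vec blk x b))\<^sup>2) = (\<Sum>b\<in>UNIV. \<Sum>i\<in>UNIV. (if blk i = b then (x$i)\<^sup>2 else 0))"
    by (simp only: e)
  also have "\<dots> = (\<Sum>i\<in>UNIV. \<Sum>b\<in>UNIV. (if blk i = b then (x$i)\<^sup>2 else 0))"
    by (rule sum.swap)
  also have "\<dots> = (norm x)\<^sup>2" unfolding norm_sq_vec by (simp add: sum.delta)
  finally show ?thesis .
qed

lemma wnorm1:
  assumes "\<forall>b. w b \<ge> 1"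
  shows "wnorm blk w 1 x = (\<Sum>b\<in>UNIV. w b * norm (blk_vec blk x b))"
proof -
  have "w b powr (2 - 1) = w b" for b using assms[rule_format, of b] by simp
  moreover have "0 \<le> (\<Sum>b\<in>UNIV. w b * norm (blk_vec blk x b))"
    using assms by (intro sum_nonneg) (metis mult_nonneg_nonneg norm_ge_zero order_trans zero_le_one)
  ultimately show ?thesis unfolding wnorm_def by simp
qed

lemma wnorm2:
  assumes "\<forall>b. w b \<ge> 1"
  shows "wnorm blk w 2 x = norm x"
proof -
  have a: "w b powr (2 - 2) = 1" for b using assms[rule_format, of b] by simp
  have b: "norm (blk_vec blk x b) powr 2 = (norm (blk_vec blk x b))\<^sup>2" for b
    by (simp add: powr_numeral)
  have "wnorm blk w 2 x = (\<Sum>b\<in>UNIV. (norm (blk_vec blk x b))\<^sup>2) powr (1/2)"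
    unfolding wnorm_def a b by simp
  also have "\<dots> = sqrt ((norm x)\<^sup>2)" by (simp add: norm_sq_blocks powr_half_sqrt)
  finally show ?thesis by simp
qed

lemma stech:
  fixes u w :: "'b::finite \<Rightarrow> real"
  assumes w1: "\<forall>b. w b \<ge> 1" and u0: "\<forall>b. u b \<ge> 0" and sp: "s > 0"
  shows "\<exists>S. (\<Sum>b\<in>S. (w b)\<^sup>2) \<le> s \<and> (\<Sum>b\<in>-S. (u b)\<^sup>2) * s \<le> (\<Sum>b\<in>UNIV. w b * u b)\<^sup>2"
proof -
  define r where "r b = u b / w b" for b
  define G where "G = {S. (\<Sum>b\<in>S. (w b)\<^sup>2) \<le> s \<and> (\<forall>b\<in>S. \<forall>c\<in>-S. r c \<le> r b)}"
  have "{} \<in> G" unfolding G_def using sp by simp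
  have fG: "finite G" by simp
  define m where "m = Max (card ` G)"
  have "m \<in> card ` G" unfolding m_def using fG \<open>{} \<in> G\<close> by (intro Max_in) auto
  then obtain S where SG: "S \<in> G" and cS: "card S = m" by auto
  have maxc: "card S' \<le> card S" if "S' \<in> G" for S'
    unfolding cS m_def using fG that by (intro Max_ge) auto
  define T where "T = (\<Sum>b\<in>UNIV. w b * u b)"
  have wu0: "0 \<le> w b * u b" for b using w1 u0 by (metis mult_nonneg_nonneg order_trans zero_le_one)
  have T0: "0 \<le> T" unfolding T_def using wu0 by (simp add: sum_nonneg)
  have r0: "0 \<le> r b" for b unfolding r_def using w1 u0 by (metis divide_nonneg_nonneg order_trans zero_le_one)
  have wr: "(w b)\<^sup>2 * r b = w b * u b" for b
    unfolding r_def using w1[rule_format, of b] by (simp add: power2_eq_square)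
  have ur: "(u b)\<^sup>2 = w b * u b * r b" for b
    unfolding r_def using w1[rule_format, of b] by (simp add: power2_eq_square)
  show ?thesis
  proof (cases "S = UNIV")
    case True
    then show ?thesis using SG unfolding G_def by auto
  next
    case False
    then have ne: "-S \<noteq> {}" by auto
    define mr where "mr = Max (r ` (-S))"
    have "mr \<in> r ` (-S)" unfolding mr_def using ne by (intro Max_in) auto
    then obtain j where jS: "j \<in> -S" and rj: "r j = mr" by auto
    have rle: "r c \<le> r j" if "c \<in> -S" for c unfolding rj mr_def using that by (intro Max_ge) auto
    have "insert j S \<notin> G"
    proof
      assume "insert j S \<in> G"
      then have "card (insert j S) \<le> card S" by (rule maxc)
      moreover have "card (insert j S) = Suc (card S)" using jS by simp
      ultimately show False by simp
    qed
    moreover have "\<forall>b\<in>insert j S. \<forall>c\<in>-insert j S. r c \<le> r b"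
      using SG rle unfolding G_def by auto
    ultimately have big: "s < (\<Sum>b\<in>insert j S. (w b)\<^sup>2)" unfolding G_def by auto
    have rjS: "r j \<le> r b" if "b \<in> S" for b using SG jS that unfolding G_def by auto
    have "(\<Sum>b\<in>-S. (u b)\<^sup>2) = (\<Sum>b\<in>-S. w b * u b * r b)" by (simp add: ur)
    also have "\<dots> \<le> (\<Sum>b\<in>-S. w b * u b * r j)"
      by (intro sum_mono mult_left_mono rle wu0) auto
    also have "\<dots> = r j * (\<Sum>b\<in>-S. w b * u b)" by (simp add: sum_distrib_left mult.commute)
    also have "\<dots> \<le> r j * T" unfolding T_def
      by (intro mult_left_mono r0 sum_mono2 wu0) auto
    finally have A: "(\<Sum>b\<in>-S. (u b)\<^sup>2) \<le> r j * T" .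
    have "s * r j \<le> (\<Sum>b\<in>insert j S. (w b)\<^sup>2) * r j"
      using big r0 by (intro mult_right_mono) auto
    also have "\<dots> = (\<Sum>b\<in>insert j S. (w b)\<^sup>2 * r j)" by (simp add: sum_distrib_right)
    also have "\<dots> \<le> (\<Sum>b\<in>insert j S. (w b)\<^sup>2 * r b)"
      using rjS by (intro sum_mono mult_left_mono) auto
    also have "\<dots> = (\<Sum>b\<in>insert j S. w b * u b)" by (simp add: wr)
    also have "\<dots> \<le> T" unfolding T_def by (intro sum_mono2 wu0) auto
    finally have B: "s * r j \<le> T" .
    have "(\<Sum>b\<in>-S. (u b)\<^sup>2) * s \<le> r j * T * s" using A sp by simp
    also have "\<dots> = (s * r j) * T" by simp
    also have "\<dots> \<le> T * T" using B T0 by (intro mult_right_mono) auto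
    finally show ?thesis using SG unfolding G_def T_def by (auto simp: power2_eq_square)
  qed
qed


lemma sum_split_compl: "(\<Sum>b\<in>UNIV. f b) = (\<Sum>b\<in>S. f b) + (\<Sum>b\<in>-S. (f b::real)) " for S :: "'b::finite set"
  using sum.subset_diff[of S UNIV f] by (simp add: Compl_eq_Diff_UNIV add.commute)

lemma norm_restr:
  fixes blk :: "'n::finite \<Rightarrow> 'b::finite"
  shows "norm (restrS blk x S) = sqrt (\<Sum>b\<in>S. (norm (blk_vec blk x b))\<^sup>2)"
proof -
  have "(norm (restrS blk x S))\<^sup>2 = (\<Sum>b\<in>UNIV. (norm (blk_vec blk (restrS blk x S) b))\<^sup>2)"
    by (simp add: norm_sq_blocks)
  also have "\<dots> = (\<Sum>b\<in>UNIV. if b \<in> S then (norm (blk_vec blk x b))\<^sup>2 else 0)"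
    by (intro sum.cong) (auto simp: blk_vec_restr)
  also have "\<dots> = (\<Sum>b\<in>S. (norm (blk_vec blk x b))\<^sup>2)" by (simp add: sum.inter_restrict[symmetric])
  finally show ?thesis by (metis norm_ge_zero real_sqrt_unique)
qed

lemma wnorm1_restr:
  assumes "\<forall>b. w b \<ge> 1"
  shows "wnorm blk w 1 (restrS blk x S) = (\<Sum>b\<in>S. w b * norm (blk_vec blk x b))"
proof -
  have "wnorm blk w 1 (restrS blk x S) = (\<Sum>b\<in>UNIV. if b \<in> S then w b * norm (blk_vec blk x b) else 0)"
    unfolding wnorm1[OF assms] by (intro sum.cong) (auto simp: blk_vec_restr)
  also have "\<dots> = (\<Sum>b\<in>S. w b * norm (blk_vec blk x b))" by (simp add: sum.inter_restrict[symmetric])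
  finally show ?thesis .
qed

lemma winf_ge: "w b \<le> winf (w::'b::finite \<Rightarrow> real)"
  unfolding winf_def by (intro Max_ge) auto

lemma nsp1:
  fixes blk :: "'n::finite \<Rightarrow> 'b::finite"
  assumes N: "BRNSP blk w 2 A s \<rho> \<tau>" and w1: "\<forall>b. w b \<ge> 1" and S: "wmeas w S \<le> s"
  shows "(\<Sum>b\<in>S. w b * norm (blk_vec blk v b)) \<le> \<rho> * (\<Sum>b\<in>-S. w b * norm (blk_vec blk v b)) + sqrt s * \<tau> * norm (A *v v)"
proof -
  have s1: "s \<ge> 1" using N winf_ge[of w] w1 unfolding BRNSP_def by (metis order_trans)
  have sp: "s powr (1 - 1/2) = sqrt s" "s powr (1/2) = sqrt s" using s1 by (simp_all add: powr_half_sqrt)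
  have ineq: "norm (restrS blk v S) \<le> \<rho> / sqrt s * (\<Sum>b\<in>-S. w b * norm (blk_vec blk v b)) + \<tau> * norm (A *v v)"
    using N S unfolding BRNSP_def wnorm2[OF w1] wnorm1_restr[OF w1] by (auto simp: sp)
  have "(\<Sum>b\<in>S. w b * norm (blk_vec blk v b)) = (\<Sum>b\<in>S. \<bar>w b\<bar> * \<bar>norm (blk_vec blk v b)\<bar>)"
  proof (intro sum.cong refl)
    fix b have "0 \<le> w b" using w1 by (metis order_trans zero_le_one)
    then show "w b * norm (blk_vec blk v b) = \<bar>w b\<bar> * \<bar>norm (blk_vec blk v b)\<bar>" by simp
  qed
  also have "\<dots> \<le> L2_set w S * L2_set (\<lambda>b. norm (blk_vec blk v b)) S" by (rule L2_set_mult_ineq)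
  also have "L2_set w S = sqrt (wmeas w S)" unfolding L2_set_def wmeas_def by simp
  also have "L2_set (\<lambda>b. norm (blk_vec blk v b)) S = norm (restrS blk v S)"
    unfolding L2_set_def norm_restr by simp
  also have "sqrt (wmeas w S) * norm (restrS blk v S) \<le> sqrt s * norm (restrS blk v S)"
    using S by (intro mult_right_mono) auto
  also have "\<dots> \<le> sqrt s * (\<rho> / sqrt s * (\<Sum>b\<in>-S. w b * norm (blk_vec blk v b)) + \<tau> * norm (A *v v))"
    using ineq s1 by (intro mult_left_mono) auto
  also have "\<dots> = \<rho> * (\<Sum>b\<in>-S. w b * norm (blk_vec blk v b)) + sqrt s * \<tau> * norm (A *v v)"
    using s1 by (simp add: field_simps)
  finally show ?thesis .
qed


lemma alg: "d \<noteq> 0 \<Longrightarrow> (2 * a * B + 2 * b * t * q * e) / d = 2 * (a / d) * B + 2 * (b / d * t) * q * (e::real)"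
  by (simp add: field_simps)

lemma alg2: "d \<noteq> 0 \<Longrightarrow> q \<noteq> 0 \<Longrightarrow> (2 * a * B + 2 * b * t * e * q) / (d * q) = 2 * (a / d) * B / q + 2 * (b / d * t) * (e::real)"
  by (simp add: field_simps)

theorem mainTheorem5:
  fixes blk :: "'n::finite \<Rightarrow> 'b::finite" and w :: "'b \<Rightarrow> real"
    and A :: "real^'n^'m::finite" and s \<rho> \<tau> \<eta> :: real
    and x xh :: "real^'n" and e y :: "real^'m"
  assumes "block_partition blk"
    and "\<forall>b. w b \<ge> 1"
    and "s \<ge> (winf w)\<^sup>2"
    and "0 < \<rho>" and "\<rho> < 1" and "\<tau> > 0"
    and "BRNSP blk w 2 A s \<rho> \<tau>"
    and "y = A *v x + e" and "norm e \<le> \<eta>"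
    and "norm (A *v xh - y) \<le> \<eta>"
    and "\<forall>z. norm (A *v z - y) \<le> \<eta> \<longrightarrow> wnorm blk w 1 xh \<le> wnorm blk w 1 z"
  shows "wnorm blk w 1 (x - xh) \<le> 2 * ((1 + \<rho>)\<^sup>2 / (1 - \<rho>)) * best_approx blk w s 1 x
            + 2 * ((3 + \<rho>) / (1 - \<rho>) * \<tau>) * sqrt s * \<eta>
       \<and> norm (x - xh) \<le> 2 * ((1 + \<rho>)\<^sup>2 / (1 - \<rho>)) * best_approx blk w s 1 x / sqrt s
            + 2 * ((3 + \<rho>) / (1 - \<rho>) * \<tau>) * \<eta>"
proof -
  note w1 = assms(2) and N = assms(7)
  have w0: "0 \<le> w b" for b using w1 by (metis order_trans zero_le_one)
  have s1: "s \<ge> 1" using N winf_ge[of w] w1 unfolding BRNSP_def by (metis order_trans)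
  have sq: "sqrt s > 0" using s1 by simp
  have eta0: "0 \<le> \<eta>" using assms(9) norm_ge_zero order_trans by blast
  define v where "v = x - xh"
  define nb where "nb z b = norm (blk_vec blk z b)" for z b
  define L where "L = (\<Sum>b\<in>UNIV. w b * nb v b)"
  have Lv: "wnorm blk w 1 v = L" unfolding L_def nb_def wnorm1[OF w1] ..
  have L0: "0 \<le> L" unfolding L_def nb_def using w0 by (intro sum_nonneg mult_nonneg_nonneg) auto
  have Av: "norm (A *v v) \<le> 2 * \<eta>"
  proof -
    have "A *v v = (A *v x - y) - (A *v xh - y)" unfolding v_def by (simp add: matrix_vector_mult_diff_distrib)
    then have "norm (A *v v) \<le> norm (A *v x - y) + norm (A *v xh - y)"
      by (metis norm_triangle_ineq4)
    moreover have "norm (A *v x - y) \<le> \<eta>" using assms(8,9) by (simp add: norm_minus_commute)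
    ultimately show ?thesis using assms(10) by simp
  qed
  have feas: "norm (A *v x - y) \<le> \<eta>" using assms(8,9) by (simp add: norm_minus_commute)
  have xmin: "(\<Sum>b\<in>UNIV. w b * nb xh b) \<le> (\<Sum>b\<in>UNIV. w b * nb x b)"
    using assms(11) feas unfolding nb_def wnorm1[OF w1] by blast
  have xh_eq: "xh = x - v" unfolding v_def by simp
  have blk1: "nb x b - nb v b \<le> nb xh b" for b
    unfolding nb_def xh_eq blk_vec_diff by (rule norm_triangle_ineq2)
  have blk2: "nb v b - nb x b \<le> nb xh b" for b
    unfolding nb_def xh_eq blk_vec_diff by (metis norm_minus_commute norm_triangle_ineq2)
  define h where "h = 2 * sqrt s * \<tau> * \<eta>"
  have l1S: "(1 - \<rho>) * L \<le> 2 * h + 2 * (1 + \<rho>) * (\<Sum>b\<in>-S. w b * nb x b)" if S: "wmeas w S \<le> s" for S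
  proof -
    define a where "a = (\<Sum>b\<in>S. w b * nb v b)"
    define bb where "bb = (\<Sum>b\<in>-S. w b * nb v b)"
    define c where "c = (\<Sum>b\<in>-S. w b * nb x b)"
    define d where "d = (\<Sum>b\<in>S. w b * nb x b)"
    have Lab: "L = a + bb" unfolding L_def a_def bb_def by (rule sum_split_compl)
    have "(\<Sum>b\<in>S. w b * (nb x b - nb v b)) + (\<Sum>b\<in>-S. w b * (nb v b - nb x b))
        \<le> (\<Sum>b\<in>S. w b * nb xh b) + (\<Sum>b\<in>-S. w b * nb xh b)"
      by (intro add_mono sum_mono mult_left_mono blk1 blk2 w0)
    also have "\<dots> = (\<Sum>b\<in>UNIV. w b * nb xh b)" by (rule sum_split_compl[symmetric])
    also have "\<dots> \<le> d + c" unfolding d_def c_def using xmin sum_split_compl by metis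
    finally have "d - a + (bb - c) \<le> d + c"
      unfolding a_def bb_def c_def d_def by (simp add: right_diff_distrib sum_subtractf)
    then have cone: "bb \<le> a + 2 * c" by simp
    have nsp: "a \<le> \<rho> * bb + sqrt s * \<tau> * norm (A *v v)"
      unfolding a_def bb_def nb_def by (rule nsp1[OF N w1 S])
    have "sqrt s * \<tau> * norm (A *v v) \<le> sqrt s * \<tau> * (2 * \<eta>)"
      using Av sq assms(6) by (intro mult_left_mono) auto
    then have nsp': "a \<le> \<rho> * bb + h" using nsp unfolding h_def by simp
    have b1: "(1 - \<rho>) * bb \<le> h + 2 * c" using nsp' cone by (simp add: algebra_simps)
    have "(1 - \<rho>) * L \<le> (1 - \<rho>) * ((1 + \<rho>) * bb + h)"
      using Lab nsp' assms(5) by (intro mult_left_mono) (auto simp: algebra_simps)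
    also have "\<dots> = (1 + \<rho>) * ((1 - \<rho>) * bb) + (1 - \<rho>) * h" by (simp add: algebra_simps)
    also have "\<dots> \<le> (1 + \<rho>) * (h + 2 * c) + (1 - \<rho>) * h"
      using b1 assms(4) by (intro add_right_mono mult_left_mono) auto
    also have "\<dots> = 2 * h + 2 * (1 + \<rho>) * c" by (simp add: algebra_simps)
    finally show ?thesis unfolding c_def .
  qed
  define BA where "BA = best_approx blk w s 1 x"
  define Z where "Z = {z. wnorm0 blk w z \<le> s}"
  have z0: "blk_vec blk 0 b = 0" for b by (simp add: blk_vec_def restrS_def vec_eq_iff)
  have Zne: "0 \<in> Z" unfolding Z_def wnorm0_def wmeas_def using s1 by (simp add: z0)
  have wn0: "0 \<le> wnorm blk w 1 z" for z unfolding wnorm1[OF w1] using w0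
    by (intro sum_nonneg mult_nonneg_nonneg) auto
  have BA0: "0 \<le> BA" unfolding BA_def best_approx_def Z_def[symmetric]
    using Zne wn0 by (intro cINF_greatest) auto
  have bnd: "((1 - \<rho>) * L - 2 * h) / (2 * (1 + \<rho>)) \<le> wnorm blk w 1 (x - z)" if "z \<in> Z" for z
  proof -
    define S where "S = {b. blk_vec blk z b \<noteq> 0}"
    have "wmeas w S \<le> s" using that unfolding Z_def S_def wnorm0_def by simp
    then have "(1 - \<rho>) * L \<le> 2 * h + 2 * (1 + \<rho>) * (\<Sum>b\<in>-S. w b * nb x b)" by (rule l1S)
    also have "(\<Sum>b\<in>-S. w b * nb x b) = (\<Sum>b\<in>-S. w b * nb (x - z) b)"
      unfolding nb_def S_def blk_vec_diff by (intro sum.cong) auto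
    also have "\<dots> \<le> (\<Sum>b\<in>UNIV. w b * nb (x - z) b)"
      unfolding nb_def using w0 by (intro sum_mono2 mult_nonneg_nonneg) auto
    also have "\<dots> = wnorm blk w 1 (x - z)" unfolding nb_def wnorm1[OF w1] ..
    finally have "(1 - \<rho>) * L - 2 * h \<le> 2 * (1 + \<rho>) * wnorm blk w 1 (x - z)"
      by (smt (verit) assms(4) mult_left_mono)
    then show ?thesis using assms(4) by (simp add: divide_simps mult.commute)
  qed
  have "((1 - \<rho>) * L - 2 * h) / (2 * (1 + \<rho>)) \<le> BA"
    unfolding BA_def best_approx_def Z_def[symmetric] using Zne bnd by (intro cINF_greatest) auto
  then have main1: "(1 - \<rho>) * L \<le> 2 * h + 2 * (1 + \<rho>) * BA"
    using assms(4) by (simp add: divide_simps mult.commute)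
  obtain S' where S'm: "(\<Sum>b\<in>S'. (w b)\<^sup>2) \<le> s"
      and S'r: "(\<Sum>b\<in>-S'. (nb v b)\<^sup>2) * s \<le> (\<Sum>b\<in>UNIV. w b * nb v b)\<^sup>2"
    using stech[of w "nb v" s] w1 s1 unfolding nb_def by auto
  have S'w: "wmeas w S' \<le> s" using S'm unfolding wmeas_def .
  have rest: "norm (restrS blk v (-S')) * sqrt s \<le> L"
  proof -
    have "(norm (restrS blk v (-S')) * sqrt s)\<^sup>2 = (\<Sum>b\<in>-S'. (nb v b)\<^sup>2) * s"
      unfolding norm_restr nb_def using s1 by (simp add: power_mult_distrib sum_nonneg)
    also have "\<dots> \<le> L\<^sup>2" using S'r unfolding L_def .
    finally show ?thesis using L0 by (meson abs_le_square_iff le_trans abs_ge_self power2_le_imp_le)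
  qed
  have nspS': "norm (restrS blk v S') \<le> \<rho> / sqrt s * (\<Sum>b\<in>-S'. w b * nb v b) + \<tau> * norm (A *v v)"
  proof -
    have sp: "s powr (1 - 1/2) = sqrt s" "s powr (1/2) = sqrt s" using s1 by (simp_all add: powr_half_sqrt)
    show ?thesis using N S'w unfolding BRNSP_def wnorm2[OF w1] wnorm1_restr[OF w1] nb_def
      by (auto simp: sp)
  qed
  have bS': "(\<Sum>b\<in>-S'. w b * nb v b) \<le> L" unfolding L_def nb_def using w0
    by (intro sum_mono2 mult_nonneg_nonneg) auto
  have "norm v \<le> norm (restrS blk v S') + norm (restrS blk v (-S'))"
    using norm_triangle_ineq[of "restrS blk v S'" "restrS blk v (-S')"] restr_split by metis
  then have "sqrt s * norm v \<le> sqrt s * norm (restrS blk v S') + norm (restrS blk v (-S')) * sqrt s"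
    using sq by (metis distrib_left less_eq_real_def mult.commute mult_left_mono)
  also have "\<dots> \<le> sqrt s * (\<rho> / sqrt s * L + \<tau> * (2 * \<eta>)) + L"
  proof -
    have "\<rho> / sqrt s * (\<Sum>b\<in>-S'. w b * nb v b) \<le> \<rho> / sqrt s * L"
      using bS' assms(4) sq by (intro mult_left_mono) auto
    moreover have "\<tau> * norm (A *v v) \<le> \<tau> * (2 * \<eta>)" using Av assms(6) by simp
    ultimately have "norm (restrS blk v S') \<le> \<rho> / sqrt s * L + \<tau> * (2 * \<eta>)" using nspS' by linarith
    then show ?thesis using rest sq by (smt (verit) mult_left_mono)
  qed
  also have "\<dots> = (1 + \<rho>) * L + h" unfolding h_def using sq by (simp add: field_simps)
  finally have main2: "sqrt s * norm v \<le> (1 + \<rho>) * L + h" .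
  have r1: "0 < 1 - \<rho>" using assms(5) by simp
  have P1: "L \<le> 2 * ((1 + \<rho>)\<^sup>2 / (1 - \<rho>)) * BA + 2 * ((3 + \<rho>) / (1 - \<rho>) * \<tau>) * sqrt s * \<eta>"
  proof -
    have "(1 - \<rho>) * L \<le> 2 * (1 + \<rho>)\<^sup>2 * BA + 2 * (3 + \<rho>) * \<tau> * sqrt s * \<eta>"
    proof -
      have "2 * (1 + \<rho>) * BA \<le> 2 * (1 + \<rho>)\<^sup>2 * BA"
      proof -
        have "2 * (1 + \<rho>) \<le> 2 * (1 + \<rho>)\<^sup>2" using assms(4) by (simp add: power2_eq_square algebra_simps)
        then show ?thesis using BA0 by (rule mult_right_mono)
      qed
      moreover have "2 * h \<le> 2 * (3 + \<rho>) * \<tau> * sqrt s * \<eta>"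
        unfolding h_def using assms(4,6) sq eta0 by (simp add: mult_right_mono)
      ultimately show ?thesis using main1 by linarith
    qed
    then have "L \<le> (2 * (1 + \<rho>)\<^sup>2 * BA + 2 * (3 + \<rho>) * \<tau> * sqrt s * \<eta>) / (1 - \<rho>)"
      using r1 by (simp add: pos_le_divide_eq mult.commute)
    also have "\<dots> = 2 * ((1 + \<rho>)\<^sup>2 / (1 - \<rho>)) * BA + 2 * ((3 + \<rho>) / (1 - \<rho>) * \<tau>) * sqrt s * \<eta>"
      using alg[of "1 - \<rho>" "(1 + \<rho>)\<^sup>2" BA "3 + \<rho>" \<tau> "sqrt s" \<eta>] r1 by simp
    finally show ?thesis .
  qed
  have P2: "norm v \<le> 2 * ((1 + \<rho>)\<^sup>2 / (1 - \<rho>)) * BA / sqrt s + 2 * ((3 + \<rho>) / (1 - \<rho>) * \<tau>) * \<eta>"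
  proof -
    have "(1 - \<rho>) * (sqrt s * norm v) \<le> (1 - \<rho>) * ((1 + \<rho>) * L + h)"
      using main2 r1 by (intro mult_left_mono) auto
    also have "\<dots> = (1 + \<rho>) * ((1 - \<rho>) * L) + (1 - \<rho>) * h" by (simp add: algebra_simps)
    also have "\<dots> \<le> (1 + \<rho>) * (2 * h + 2 * (1 + \<rho>) * BA) + (1 - \<rho>) * h"
      using main1 assms(4) by (intro add_right_mono mult_left_mono) auto
    also have "\<dots> = 2 * (1 + \<rho>)\<^sup>2 * BA + 2 * (3 + \<rho>) * \<tau> * \<eta> * sqrt s"
      unfolding h_def by (simp add: algebra_simps power2_eq_square)
    finally have "(1 - \<rho>) * (sqrt s * norm v) \<le> 2 * (1 + \<rho>)\<^sup>2 * BA + 2 * (3 + \<rho>) * \<tau> * \<eta> * sqrt s" .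
    then have "norm v \<le> (2 * (1 + \<rho>)\<^sup>2 * BA + 2 * (3 + \<rho>) * \<tau> * \<eta> * sqrt s) / ((1 - \<rho>) * sqrt s)"
      using r1 sq by (simp add: pos_le_divide_eq mult.commute mult.left_commute)
    also have "\<dots> = 2 * ((1 + \<rho>)\<^sup>2 / (1 - \<rho>)) * BA / sqrt s + 2 * ((3 + \<rho>) / (1 - \<rho>) * \<tau>) * \<eta>"
      using alg2[of "1 - \<rho>" "sqrt s" "(1 + \<rho>)\<^sup>2" BA "3 + \<rho>" \<tau> \<eta>] r1 sq by simp
    finally show ?thesis .
  qed
  show ?thesis using P1 P2 Lv unfolding v_def BA_def by simp
qed

end
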